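(* Let $G=(V,E)$ be a finite planar embedded graph, $\mathbf{p}$ a packing of $G$, and $V=V^+\sqcup V^-\sqcup V^=\sqcup V^0$ a partition. Then $\mathbf{p}$ is second order rigid if and only if every nontrivial proper infinitesimal flex $\mathbf{p}'$ is blocked by some equilibrium stress $\omega$.
   Context: A packing of $G=(V,E)$, $V=\{1,\dots,n\}$, is $\mathbf{p}=(x_1,y_1,r_1,\dots,x_n,y_n,r_n)\in\mathbb{R}^{3n}$, all $r_i>0$, with $(r_i+r_j)^2=(x_i-x_j)^2+(y_i-y_j)^2$ for all $(i,j)\in E$ and the neighbors of each vertex in the same counterclockwise order as in the embedding; $\mathbf{p}_i=(x_i,y_i)$. Partition: $V^+$ (radius may increase or stay), $V^-$ (may decrease or stay), $V^=$ (fixed), $V^0$ (free). An infinitesimal flex is $\mathbf{p}'$ with $(\mathbf{p}_i-\mathbf{p}_j)\cdot(\mathbf{p}_i'-\mathbf{p}_j')=(r_i+r_j)(r_i'+r_j')$ for all edges; proper if $r_i'\ge 0$ on $V^+$, $\le0$ on $V^-$, $=0$ on $V^=$; trivial if it is the derivative of a family of rigid motions (rotations/translations of centers, radii unchanged). For proper $\mathbf{p}'$, the modified partition is $\tilde V^+=\{i\in V^+:r_i'=0\}$, $\tilde V^-=\{i\in V^-:r_i'=0\}$, $\tilde V^==V^=$, $\tilde V^0$ the rest. $\mathbf{p}'$ is extendable if there is $\mathbf{p}''\in\mathbb{R}^{3n}$ with $(\mathbf{p}_i-\mathbf{p}_j)\cdot(\mathbf{p}_i''-\mathbf{p}_j'')-(r_i+r_j)(r_i''+r_j'')=(r_i'+r_j')^2-(\mathbf{p}_i'-\mathbf{p}_j')\cdot(\mathbf{p}_i'-\mathbf{p}_j')$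 for all $(i,j)\in E$, and $r_i''\ge0$ on $\tilde V^+$, $\le 0$ on $\tilde V^-$, $=0$ on $\tilde V^=$. $\mathbf{p}$ is second order rigid if no nontrivial proper infinitesimal flex is extendable. A stress $\omega:E\to\mathbb{R}$ is an equilibrium stress if $\sum_{j:(i,j)\in E}\omega_{ij}(\mathbf{p}_i-\mathbf{p}_j)=0$ for all $i$; its radial force sum is $\omega_i=\sum_{j:(i,j)\in E}\omega_{ij}(r_i+r_j)$. An equilibrium stress $\omega$ blocks $\mathbf{p}'$ if $\omega_i\ge 0$ for $i\in\tilde V^-$, $\omega_i\le0$ for $i\in\tilde V^+$, $\omega_i=0$ for $i\in\tilde V^0$, and $\sum_{(i,j)\in E}\omega_{ij}[(\mathbf{p}_i'-\mathbf{p}_j')\cdot(\mathbf{p}_i'-\mathbf{p}_j')-(r_i'+r_j')^2]>0$. *)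

theory Defs
  imports "HOL-Analysis.Analysis"
begin

(* Vertices are {..<n}.  Undirected edges are stored once, as pairs (i,j) with i < j. *)
definition simple_graph :: "nat \<Rightarrow> (nat \<times> nat) set \<Rightarrow> bool" where
  "simple_graph n E \<longleftrightarrow> E \<subseteq> {(i,j). i < j \<and> j < n}"

definition adj :: "(nat \<times> nat) set \<Rightarrow> nat \<Rightarrow> nat \<Rightarrow> bool" where
  "adj E i j \<longleftrightarrow> (i,j) \<in> E \<or> (j,i) \<in> E"

(* combinatorial embedding: rotation system, rot i = neighbours of i in counterclockwise order *)
definition rotation_system :: "nat \<Rightarrow> (nat \<times> nat) set \<Rightarrow> (nat \<Rightarrow> nat list) \<Rightarrow> bool" where
  "rotation_system n E rot \<longleftrightarrow>
     (\<forall>i<n. distinct (rot i) \<and> set (rot i) = {j. adj E i j})"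

definition rot_next :: "nat list \<Rightarrow> nat \<Rightarrow> nat" where
  "rot_next xs a = xs ! (((THE k. k < length xs \<and> xs ! k = a) + 1) mod length xs)"

definition face_succ :: "(nat \<Rightarrow> nat list) \<Rightarrow> nat \<times> nat \<Rightarrow> nat \<times> nat" where
  "face_succ rot d = (snd d, rot_next (rot (snd d)) (fst d))"

definition darts :: "(nat \<times> nat) set \<Rightarrow> (nat \<times> nat) set" where
  "darts E = {(i,j). adj E i j}"

(* number of faces of the embedding = number of orbits of the face permutation on darts *)
definition num_faces :: "(nat \<times> nat) set \<Rightarrow> (nat \<Rightarrow> nat list) \<Rightarrow> nat" where
  "num_faces E rot =
     card ((\<lambda>d. {e \<in> darts E. \<exists>m. (face_succ rot ^^ m) d = e}) ` darts E)"

definition component :: "nat \<Rightarrow> (nat \<times> nat) set \<Rightarrow> nat \<Rightarrow> nat set" where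
  "component n E i = {j. j < n \<and> (i,j) \<in> (darts E)\<^sup>*}"

definition num_edge_components :: "nat \<Rightarrow> (nat \<times> nat) set \<Rightarrow> nat" where
  "num_edge_components n E = card {component n E i | i. i < n \<and> (\<exists>j. adj E i j)}"

definition num_isolated :: "nat \<Rightarrow> (nat \<times> nat) set \<Rightarrow> nat" where
  "num_isolated n E = card {i. i < n \<and> \<not> (\<exists>j. adj E i j)}"

(* planar (genus 0) embedding: Euler's formula V - E + F = 2 on every component
   (isolated vertices have no darts, hence are counted separately) *)
definition planar_embedding :: "nat \<Rightarrow> (nat \<times> nat) set \<Rightarrow> (nat \<Rightarrow> nat list) \<Rightarrow> bool" where
  "planar_embedding n E rot \<longleftrightarrow> simple_graph n E \<and> rotation_system n E rot \<and>
     int n - int (card E) + int (num_faces E rot)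
       = 2 * int (num_edge_components n E) + int (num_isolated n E)"

definition ccw_order :: "complex list \<Rightarrow> bool" where
  "ccw_order vs \<longleftrightarrow> (\<exists>k. sorted_wrt (<) (map Arg (rotate k vs)))"

definition packing :: "nat \<Rightarrow> (nat \<times> nat) set \<Rightarrow> (nat \<Rightarrow> nat list) \<Rightarrow>
    (nat \<Rightarrow> complex) \<Rightarrow> (nat \<Rightarrow> real) \<Rightarrow> bool" where
  "packing n E rot c r \<longleftrightarrow>
     (\<forall>i<n. r i > 0) \<and>
     (\<forall>(i,j)\<in>E. (r i + r j)\<^sup>2 = (norm (c i - c j))\<^sup>2) \<and>
     (\<forall>i<n. ccw_order (map (\<lambda>j. c j - c i) (rot i)))"

definition partition4 :: "nat \<Rightarrow> nat set \<Rightarrow> nat set \<Rightarrow> nat set \<Rightarrow> nat set \<Rightarrow> bool" where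
  "partition4 n Vp Vm Ve V0 \<longleftrightarrow> Vp \<union> Vm \<union> Ve \<union> V0 = {..<n} \<and>
     Vp \<inter> Vm = {} \<and> Vp \<inter> Ve = {} \<and> Vp \<inter> V0 = {} \<and>
     Vm \<inter> Ve = {} \<and> Vm \<inter> V0 = {} \<and> Ve \<inter> V0 = {}"

definition inf_flex :: "(nat \<times> nat) set \<Rightarrow> (nat \<Rightarrow> complex) \<Rightarrow> (nat \<Rightarrow> real) \<Rightarrow>
    (nat \<Rightarrow> complex) \<Rightarrow> (nat \<Rightarrow> real) \<Rightarrow> bool" where
  "inf_flex E c r c' r' \<longleftrightarrow>
     (\<forall>(i,j)\<in>E. (c i - c j) \<bullet> (c' i - c' j) = (r i + r j) * (r' i + r' j))"

definition proper_flex :: "nat set \<Rightarrow> nat set \<Rightarrow> nat set \<Rightarrow> (nat \<Rightarrow> real) \<Rightarrow> bool" where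
  "proper_flex Vp Vm Ve r' \<longleftrightarrow>
     (\<forall>i\<in>Vp. r' i \<ge> 0) \<and> (\<forall>i\<in>Vm. r' i \<le> 0) \<and> (\<forall>i\<in>Ve. r' i = 0)"

(* derivative at t = 0 of a family of rigid motions (rotation + translation) starting at the identity *)
definition trivial_flex :: "nat \<Rightarrow> (nat \<Rightarrow> complex) \<Rightarrow> (nat \<Rightarrow> complex) \<Rightarrow> (nat \<Rightarrow> real) \<Rightarrow> bool" where
  "trivial_flex n c c' r' \<longleftrightarrow> (\<forall>i<n. r' i = 0) \<and>
     (\<exists>(\<theta>::real \<Rightarrow> real) (\<tau>::real \<Rightarrow> complex). \<theta> 0 = 0 \<and> \<tau> 0 = 0 \<and>
        (\<forall>i<n. ((\<lambda>t. cis (\<theta> t) * c i + \<tau> t) has_vector_derivative c' i) (at 0)))"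

definition tVp :: "nat set \<Rightarrow> (nat \<Rightarrow> real) \<Rightarrow> nat set" where
  "tVp Vp r' = {i \<in> Vp. r' i = 0}"
definition tVm :: "nat set \<Rightarrow> (nat \<Rightarrow> real) \<Rightarrow> nat set" where
  "tVm Vm r' = {i \<in> Vm. r' i = 0}"
definition tV0 :: "nat \<Rightarrow> nat set \<Rightarrow> nat set \<Rightarrow> nat set \<Rightarrow> (nat \<Rightarrow> real) \<Rightarrow> nat set" where
  "tV0 n Vp Vm Ve r' = {..<n} - (tVp Vp r' \<union> tVm Vm r' \<union> Ve)"

definition extendable :: "(nat \<times> nat) set \<Rightarrow> nat set \<Rightarrow> nat set \<Rightarrow> nat set \<Rightarrow>
    (nat \<Rightarrow> complex) \<Rightarrow> (nat \<Rightarrow> real) \<Rightarrow> (nat \<Rightarrow> complex) \<Rightarrow> (nat \<Rightarrow> real) \<Rightarrow> bool" where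
  "extendable E Vp Vm Ve c r c' r' \<longleftrightarrow>
     (\<exists>(c''::nat \<Rightarrow> complex) (r''::nat \<Rightarrow> real).
        (\<forall>(i,j)\<in>E. (c i - c j) \<bullet> (c'' i - c'' j) - (r i + r j) * (r'' i + r'' j)
                    = (r' i + r' j)\<^sup>2 - (c' i - c' j) \<bullet> (c' i - c' j)) \<and>
        (\<forall>i\<in>tVp Vp r'. r'' i \<ge> 0) \<and> (\<forall>i\<in>tVm Vm r'. r'' i \<le> 0) \<and> (\<forall>i\<in>Ve. r'' i = 0))"

definition second_order_rigid :: "nat \<Rightarrow> (nat \<times> nat) set \<Rightarrow> nat set \<Rightarrow> nat set \<Rightarrow> nat set \<Rightarrow>
    (nat \<Rightarrow> complex) \<Rightarrow> (nat \<Rightarrow> real) \<Rightarrow> bool" where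
  "second_order_rigid n E Vp Vm Ve c r \<longleftrightarrow>
     (\<forall>c' r'. inf_flex E c r c' r' \<and> proper_flex Vp Vm Ve r' \<and> \<not> trivial_flex n c c' r'
        \<longrightarrow> \<not> extendable E Vp Vm Ve c r c' r')"

(* stresses are functions on the (stored) edges; stress on the unordered pair {i,j} *)
definition sw :: "(nat \<times> nat \<Rightarrow> real) \<Rightarrow> nat \<Rightarrow> nat \<Rightarrow> real" where
  "sw \<omega> i j = \<omega> (min i j, max i j)"

definition equilibrium_stress :: "nat \<Rightarrow> (nat \<times> nat) set \<Rightarrow> (nat \<Rightarrow> complex) \<Rightarrow>
    (nat \<times> nat \<Rightarrow> real) \<Rightarrow> bool" where
  "equilibrium_stress n E c \<omega> \<longleftrightarrow>
     (\<forall>i<n. (\<Sum>j\<in>{j. j < n \<and> adj E i j}. sw \<omega> i j *\<^sub>R (c i - c j)) = 0)"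

definition radial_force :: "nat \<Rightarrow> (nat \<times> nat) set \<Rightarrow> (nat \<Rightarrow> real) \<Rightarrow>
    (nat \<times> nat \<Rightarrow> real) \<Rightarrow> nat \<Rightarrow> real" where
  "radial_force n E r \<omega> i = (\<Sum>j\<in>{j. j < n \<and> adj E i j}. sw \<omega> i j * (r i + r j))"

definition blocks :: "nat \<Rightarrow> (nat \<times> nat) set \<Rightarrow> nat set \<Rightarrow> nat set \<Rightarrow> nat set \<Rightarrow>
    (nat \<Rightarrow> complex) \<Rightarrow> (nat \<Rightarrow> real) \<Rightarrow> (nat \<times> nat \<Rightarrow> real) \<Rightarrow>
    (nat \<Rightarrow> complex) \<Rightarrow> (nat \<Rightarrow> real) \<Rightarrow> bool" where
  "blocks n E Vp Vm Ve c r \<omega> c' r' \<longleftrightarrow>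
     equilibrium_stress n E c \<omega> \<and>
     (\<forall>i\<in>tVm Vm r'. radial_force n E r \<omega> i \<ge> 0) \<and>
     (\<forall>i\<in>tVp Vp r'. radial_force n E r \<omega> i \<le> 0) \<and>
     (\<forall>i\<in>tV0 n Vp Vm Ve r'. radial_force n E r \<omega> i = 0) \<and>
     (\<Sum>(i,j)\<in>E. \<omega> (i,j) * ((c' i - c' j) \<bullet> (c' i - c' j) - (r' i + r' j)\<^sup>2)) > 0"

end

theory Submission
  imports Defs
begin




definition ipE :: "(nat \<times> nat) set \<Rightarrow> (nat \<times> nat \<Rightarrow> real) \<Rightarrow> (nat \<times> nat \<Rightarrow> real) \<Rightarrow> real" where
  "ipE E y a = (\<Sum>e\<in>E. y e * a e)"

definition incone :: "(nat \<times> nat) set \<Rightarrow> (nat \<times> nat \<Rightarrow> real) list \<Rightarrow> (nat \<times> nat \<Rightarrow> real) \<Rightarrow> bool" where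
  "incone E as b \<longleftrightarrow> (\<exists>l::nat\<Rightarrow>real. (\<forall>k<length as. 0 \<le> l k) \<and>
      (\<forall>e\<in>E. b e = (\<Sum>k<length as. l k * (as!k) e)))"

lemma ipE_lin1: "ipE E (\<lambda>e. p * u e - q * w e) x = p * ipE E u x - q * ipE E w x"
  by (simp add: ipE_def sum_subtractf sum_distrib_left algebra_simps)

lemma ipE_lin2: "ipE E x (\<lambda>e. p * u e - q * w e) = p * ipE E x u - q * ipE E x w"
  by (simp add: ipE_def sum_subtractf sum_distrib_left algebra_simps)

lemma farkas_len:
  assumes "finite E"
  shows "length as0 = m \<Longrightarrow> \<not> incone E as0 b \<Longrightarrow> \<exists>y. (\<forall>a\<in>set as0. ipE E y a \<ge> 0) \<and> ipE E y b < 0"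
proof (induction m arbitrary: as0 b)
  case 0
  then have "as0 = []" by simp
  with 0 have Nil: "\<not> incone E [] b" by simp
  then obtain e where e: "e \<in> E" "b e \<noteq> 0" by (auto simp: incone_def)
  have "0 < (\<Sum>e\<in>E. b e * b e)"
    using e by (intro sum_pos2[OF assms(1) e(1)]) (auto simp: zero_less_mult_iff)
  then have "ipE E (\<lambda>e. - b e) b < 0" by (simp add: ipE_def sum_negf)
  then show ?case using \<open>as0 = []\<close> by auto
next
  case (Suc m)
  then obtain a as where aas: "as0 = a # as" "length as = m" by (cases as0) auto
  have Cons_prems: "\<not> incone E (a#as) b" using Suc aas by simp
  note IH = Suc.IH
  have "\<exists>y. (\<forall>a\<in>set (a#as). ipE E y a \<ge> 0) \<and> ipE E y b < 0"
  proof -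
  have "\<not> incone E as b"
  proof
    assume "incone E as b"
    then obtain l where l: "\<forall>k<length as. 0 \<le> l k" "\<forall>e\<in>E. b e = (\<Sum>k<length as. l k * (as!k) e)"
      by (auto simp: incone_def)
    have "incone E (a#as) b"
      unfolding incone_def
      apply (rule exI[of _ "\<lambda>k. case k of 0 \<Rightarrow> 0 | Suc k \<Rightarrow> l k"])
      using l by (auto simp del: sum.lessThan_Suc simp add: sum.lessThan_Suc_shift less_Suc_eq_0_disj)
    then show False using Cons_prems by simp
  qed
  then obtain y where y: "\<forall>a\<in>set as. ipE E y a \<ge> 0" "ipE E y b < 0"
    using IH aas by blast
  show ?thesis
  proof (cases "ipE E y a \<ge> 0")
    case True
    then show ?thesis using y by auto
  next
    case False
    define \<alpha> where "\<alpha> = ipE E y a"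
    have a0: "\<alpha> < 0" using False \<alpha>_def by simp
    define f where "f = (\<lambda>v e. ipE E y v * a e - \<alpha> * v e)"
    define as' where "as' = map f as"
    define b' where "b' = f b"
    have "\<not> incone E as' b'"
    proof
      assume "incone E as' b'"
      then obtain \<mu> where mu: "\<forall>k<length as. 0 \<le> \<mu> k"
          "\<forall>e\<in>E. b' e = (\<Sum>k<length as. \<mu> k * (f (as!k)) e)"
        by (auto simp: incone_def as'_def)
      define \<theta> where "\<theta> = ((\<Sum>k<length as. \<mu> k * ipE E y (as!k)) - ipE E y b) / (- \<alpha>)"
      have th: "0 \<le> \<theta>"
      proof -
        have "0 \<le> (\<Sum>k<length as. \<mu> k * ipE E y (as!k))"
          using mu(1) y(1) by (auto intro!: sum_nonneg)
        then show ?thesis using y(2) a0 unfolding \<theta>_def by (intro divide_nonneg_pos) auto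
      qed
      have "\<forall>e\<in>E. b e = \<theta> * a e + (\<Sum>k<length as. \<mu> k * (as!k) e)"
      proof
        fix e assume "e \<in> E"
        then have "ipE E y b * a e - \<alpha> * b e =
            (\<Sum>k<length as. \<mu> k * ipE E y (as!k)) * a e - \<alpha> * (\<Sum>k<length as. \<mu> k * (as!k) e)"
          using mu(2) by (simp add: b'_def f_def sum_subtractf sum_distrib_left sum_distrib_right algebra_simps)
        then show "b e = \<theta> * a e + (\<Sum>k<length as. \<mu> k * (as!k) e)"
          using a0 unfolding \<theta>_def by (simp add: field_simps)
      qed
      then have "incone E (a#as) b"
        unfolding incone_def
        apply (intro exI[of _ "\<lambda>k. case k of 0 \<Rightarrow> \<theta> | Suc k \<Rightarrow> \<mu> k"])
        using mu(1) th by (auto simp del: sum.lessThan_Suc simp add: sum.lessThan_Suc_shift less_Suc_eq_0_disj)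
      then show False using Cons_prems by simp
    qed
    from \<open>\<not> incone E as' b'\<close> obtain y' where y': "\<forall>v\<in>set as'. ipE E y' v \<ge> 0" "ipE E y' b' < 0"
      using IH[of as' b'] aas by (auto simp: as'_def)
    define yh where "yh = (\<lambda>e. ipE E y' a * y e - \<alpha> * y' e)"
    have key: "ipE E yh v = ipE E y' (f v)" for v
      unfolding yh_def f_def by (simp add: ipE_lin1 ipE_lin2)
    have "ipE E yh a = 0" using key unfolding f_def \<alpha>_def
      by (simp add: ipE_lin2)
    moreover have "\<forall>v\<in>set as. ipE E yh v \<ge> 0" using key y'(1) by (simp add: as'_def)
    moreover have "ipE E yh b < 0" using key y'(2) by (simp add: b'_def)
    ultimately show ?thesis by (intro exI[of _ yh]) auto
  qed
  qed
  then show ?case using aas by simp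
qed

lemma farkas:
  assumes "finite E" "\<not> incone E as b"
  shows "\<exists>y. (\<forall>a\<in>set as. ipE E y a \<ge> 0) \<and> ipE E y b < 0"
  using farkas_len[OF assms(1) refl assms(2)] .


definition Lmap :: "(nat \<Rightarrow> complex) \<Rightarrow> (nat \<Rightarrow> real) \<Rightarrow> (nat \<Rightarrow> complex) \<Rightarrow> (nat \<Rightarrow> real) \<Rightarrow> nat \<times> nat \<Rightarrow> real" where
  "Lmap c r C R e = (c (fst e) - c (snd e)) \<bullet> (C (fst e) - C (snd e)) - (r (fst e) + r (snd e)) * (R (fst e) + R (snd e))"

definition delta :: "nat \<Rightarrow> 'a::zero \<Rightarrow> nat \<Rightarrow> 'a" where
  "delta i z = (\<lambda>m. if m = i then z else 0)"

definition eqf :: "nat \<Rightarrow> (nat \<times> nat) set \<Rightarrow> (nat \<Rightarrow> complex) \<Rightarrow> (nat \<times> nat \<Rightarrow> real) \<Rightarrow> nat \<Rightarrow> complex" where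
  "eqf n E c \<omega> i = (\<Sum>j\<in>{j. j < n \<and> adj E i j}. sw \<omega> i j *\<^sub>R (c i - c j))"

lemma Lmap_sum:
  "Lmap c r (\<lambda>m. \<Sum>k\<in>K. l k *\<^sub>R F k m) (\<lambda>m. \<Sum>k\<in>K. l k * G k m) e = (\<Sum>k\<in>K. l k * Lmap c r (F k) (G k) e)"
  by (simp add: Lmap_def inner_sum_right sum_subtractf[symmetric] sum.distrib[symmetric]
      sum_distrib_left algebra_simps inner_diff_right)

lemma simple_finite: "simple_graph n E \<Longrightarrow> finite E"
  unfolding simple_graph_def
  by (rule finite_subset[of _ "{..<n} \<times> {..<n}"]) auto

lemma nbr_sum:
  fixes h :: "nat \<Rightarrow> 'a::comm_monoid_add"
  assumes sg: "simple_graph n E"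
  shows "(\<Sum>e\<in>E. (if fst e = i then h (snd e) else 0) + (if snd e = i then h (fst e) else 0))
       = (\<Sum>j\<in>{j. j < n \<and> adj E i j}. h j)"
proof -
  have fin: "finite E" using simple_finite[OF sg] .
  have E: "\<And>j k. (j,k) \<in> E \<Longrightarrow> j < k \<and> k < n" using sg unfolding simple_graph_def by auto
  have s1: "(\<Sum>e\<in>E. (if fst e = i then h (snd e) else 0)) = (\<Sum>e\<in>E \<inter> {e. fst e = i}. h (snd e))"
    using fin by (simp add: sum.inter_filter Int_def)
  also have "\<dots> = (\<Sum>k\<in>snd ` (E \<inter> {e. fst e = i}). h k)"
    by (rule sum.reindex[symmetric, unfolded comp_def]) (auto simp: inj_on_def)
  finally have A: "(\<Sum>e\<in>E. (if fst e = i then h (snd e) else 0)) = (\<Sum>k\<in>snd ` (E \<inter> {e. fst e = i}). h k)" .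
  have "(\<Sum>e\<in>E. (if snd e = i then h (fst e) else 0)) = (\<Sum>e\<in>E \<inter> {e. snd e = i}. h (fst e))"
    using fin by (simp add: sum.inter_filter Int_def)
  also have "\<dots> = (\<Sum>k\<in>fst ` (E \<inter> {e. snd e = i}). h k)"
    by (rule sum.reindex[symmetric, unfolded comp_def]) (auto simp: inj_on_def)
  finally have B: "(\<Sum>e\<in>E. (if snd e = i then h (fst e) else 0)) = (\<Sum>k\<in>fst ` (E \<inter> {e. snd e = i}). h k)" .
  have U: "{j. j < n \<and> adj E i j} = snd ` (E \<inter> {e. fst e = i}) \<union> fst ` (E \<inter> {e. snd e = i})"
  proof -
    have 1: "snd ` (E \<inter> {e. fst e = i}) = {k. (i,k) \<in> E}" by force
    have 2: "fst ` (E \<inter> {e. snd e = i}) = {k. (k,i) \<in> E}" by force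
    show ?thesis unfolding 1 2 using E by (auto simp: adj_def dest: E)
  qed
  have D: "snd ` (E \<inter> {e. fst e = i}) \<inter> fst ` (E \<inter> {e. snd e = i}) = {}"
  proof -
    { fix x assume "x \<in> snd ` (E \<inter> {e. fst e = i})" "x \<in> fst ` (E \<inter> {e. snd e = i})"
      then have "(i,x) \<in> E" "(x,i) \<in> E" by force+
      then have False using E[of i x] E[of x i] by simp }
    then show ?thesis by blast
  qed
  have F1: "finite (snd ` (E \<inter> {e. fst e = i}))" "finite (fst ` (E \<inter> {e. snd e = i}))"
    using fin by auto
  show ?thesis
    unfolding sum.distrib A B U by (rule sum.union_disjoint[symmetric, OF F1 D])
qed

lemma ip_delta:
  assumes sg: "simple_graph n E"
  shows "ipE E \<omega> (Lmap c r (delta i z) (delta i s)) = z \<bullet> eqf n E c \<omega> i - s * radial_force n E r \<omega> i"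
proof -
  define h where "h = (\<lambda>m. sw \<omega> i m * ((c i - c m) \<bullet> z - (r i + r m) * s))"
  have E: "\<And>j k. (j,k) \<in> E \<Longrightarrow> j < k \<and> k < n" using sg unfolding simple_graph_def by auto
  have "ipE E \<omega> (Lmap c r (delta i z) (delta i s)) =
      (\<Sum>e\<in>E. (if fst e = i then h (snd e) else 0) + (if snd e = i then h (fst e) else 0))"
    unfolding ipE_def
  proof (rule sum.cong[OF refl])
    fix e assume "e \<in> E"
    then obtain j k where e: "e = (j,k)" "j < k" "k < n" using E by (cases e) auto
    show "\<omega> e * Lmap c r (delta i z) (delta i s) e = (if fst e = i then h (snd e) else 0) + (if snd e = i then h (fst e) else 0)"
      using e by (auto simp: h_def Lmap_def delta_def sw_def min_def max_def inner_commute algebra_simps)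
  qed
  also have "\<dots> = (\<Sum>j\<in>{j. j < n \<and> adj E i j}. h j)" by (rule nbr_sum[OF sg])
  also have "\<dots> = z \<bullet> eqf n E c \<omega> i - s * radial_force n E r \<omega> i"
    by (simp add: h_def eqf_def radial_force_def inner_sum_right sum_distrib_left sum_subtractf[symmetric]
        inner_commute algebra_simps)
  finally show ?thesis .
qed


definition bvec :: "(nat \<Rightarrow> complex) \<Rightarrow> (nat \<Rightarrow> real) \<Rightarrow> nat \<times> nat \<Rightarrow> real" where
  "bvec c' r' e = (r' (fst e) + r' (snd e))\<^sup>2 - (c' (fst e) - c' (snd e)) \<bullet> (c' (fst e) - c' (snd e))"

lemma extendable_iff:
  "extendable E Vp Vm Ve c r c' r' \<longleftrightarrow>
     (\<exists>C R. (\<forall>e\<in>E. Lmap c r C R e = bvec c' r' e) \<and>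
        (\<forall>i\<in>tVp Vp r'. R i \<ge> 0) \<and> (\<forall>i\<in>tVm Vm r'. R i \<le> 0) \<and> (\<forall>i\<in>Ve. R i = 0))"
  unfolding extendable_def Lmap_def bvec_def by (auto simp: case_prod_beta)

lemma blocks_sum:
  "(\<Sum>(i,j)\<in>E. \<omega> (i,j) * ((c' i - c' j) \<bullet> (c' i - c' j) - (r' i + r' j)\<^sup>2)) = - ipE E \<omega> (bvec c' r')"
  unfolding ipE_def bvec_def by (simp add: case_prod_beta sum_negf[symmetric] algebra_simps)

lemma decomp:
  assumes sg: "simple_graph n E" and e: "e \<in> E"
  shows "Lmap c r C R e = (\<Sum>i<n. Lmap c r (delta i (C i)) (delta i (R i)) e)"
proof -
  from e sg obtain j k where jk: "e = (j,k)" "j < n" "k < n" unfolding simple_graph_def by auto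
  have "(\<Sum>i<n. Lmap c r (delta i (C i)) (delta i (R i)) e) =
     Lmap c r (\<lambda>m. \<Sum>i<n. 1 *\<^sub>R delta i (C i) m) (\<lambda>m. \<Sum>i<n. 1 * delta i (R i) m) e"
    by (subst Lmap_sum) simp
  also have "\<dots> = Lmap c r C R e"
    using jk by (simp add: Lmap_def delta_def)
  finally show ?thesis by simp
qed

lemma pointwise:
  assumes sg: "simple_graph n E" and pt: "partition4 n Vp Vm Ve V0"
  shows "\<not> extendable E Vp Vm Ve c r c' r' \<longleftrightarrow> (\<exists>\<omega>. blocks n E Vp Vm Ve c r \<omega> c' r')"
proof
  assume ne: "\<not> extendable E Vp Vm Ve c r c' r'"
  define gen where "gen = (\<lambda>i::nat. [(i,1::complex,0::real),(i,-1,0),(i,\<i>,0),(i,-\<i>,0)] @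
     (if i \<in> tVp Vp r' then [(i,0,1)] else if i \<in> tVm Vm r' then [(i,0,-1)] else if i \<in> Ve then []
      else [(i,0,1),(i,0,-1)]))"
  define ts where "ts = concat (map gen [0..<n])"
  define gens where "gens = map (\<lambda>(i,z,s). Lmap c r (delta i z) (delta i s)) ts"
  have dj: "tVp Vp r' \<inter> tVm Vm r' = {}" "tVp Vp r' \<inter> Ve = {}" "tVm Vm r' \<inter> Ve = {}"
    using pt unfolding partition4_def tVp_def tVm_def by blast+
  have sub: "Vp \<subseteq> {..<n}" "Vm \<subseteq> {..<n}" "Ve \<subseteq> {..<n}"
    using pt unfolding partition4_def by blast+
  have tsP0: "(fst t \<in> tVp Vp r' \<longrightarrow> snd (snd t) \<ge> 0) \<and> (fst t \<in> tVm Vm r' \<longrightarrow> snd (snd t) \<le> 0) \<and>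
     (fst t \<in> Ve \<longrightarrow> snd (snd t) = 0)" if "t \<in> set ts" for t
  proof -
    from that obtain i where i: "t \<in> set (gen i)" unfolding ts_def by auto
    show ?thesis
    proof (cases "i \<in> tVp Vp r'")
      case True then show ?thesis using i dj unfolding gen_def by auto
    next
      case F1: False
      show ?thesis
      proof (cases "i \<in> tVm Vm r'")
        case True then show ?thesis using i dj F1 unfolding gen_def by auto
      next
        case F2: False
        then show ?thesis using i dj F1 unfolding gen_def by (cases "i \<in> Ve") auto
      qed
    qed
  qed
  have tsP: "fst t \<in> tVp Vp r' \<Longrightarrow> snd (snd t) \<ge> 0" "fst t \<in> tVm Vm r' \<Longrightarrow> snd (snd t) \<le> 0"
     "fst t \<in> Ve \<Longrightarrow> snd (snd t) = 0" if "t \<in> set ts" for t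
    using tsP0[OF that] by auto
  have "\<not> incone E gens (bvec c' r')"
  proof
    assume "incone E gens (bvec c' r')"
    then obtain l where l: "\<forall>k<length ts. 0 \<le> l k"
      "\<forall>e\<in>E. bvec c' r' e = (\<Sum>k<length ts. l k * (gens!k) e)"
      by (auto simp: incone_def gens_def)
    define C where "C = (\<lambda>m. \<Sum>k<length ts. l k *\<^sub>R delta (fst (ts!k)) (fst (snd (ts!k))) m)"
    define R where "R = (\<lambda>m. \<Sum>k<length ts. l k * delta (fst (ts!k)) (snd (snd (ts!k))) m)"
    have "\<forall>e\<in>E. Lmap c r C R e = bvec c' r' e"
      using l(2) unfolding C_def R_def
      by (simp add: Lmap_sum gens_def case_prod_beta)
    moreover have "\<forall>i\<in>tVp Vp r'. R i \<ge> 0"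
      unfolding R_def using l(1) tsP(1)[OF nth_mem]
      by (auto intro!: sum_nonneg simp: delta_def)
    moreover have "\<forall>i\<in>tVm Vm r'. R i \<le> 0"
      unfolding R_def using l(1) tsP(2)[OF nth_mem]
      by (auto intro!: sum_nonpos simp: delta_def mult_nonneg_nonpos)
    moreover have "\<forall>i\<in>Ve. R i = 0"
      unfolding R_def using l(1) tsP(3)[OF nth_mem]
      by (auto intro!: sum.neutral simp: delta_def)
    ultimately have "extendable E Vp Vm Ve c r c' r'"
      unfolding extendable_iff by blast
    with ne show False by simp
  qed
  then obtain \<omega> where w: "\<forall>a\<in>set gens. ipE E \<omega> a \<ge> 0" "ipE E \<omega> (bvec c' r') < 0"
    using farkas[OF simple_finite[OF sg]] by blast
  have W: "0 \<le> z \<bullet> eqf n E c \<omega> i - s * radial_force n E r \<omega> i" if "(i,z,s) \<in> set ts" for i z s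
    using w(1) that ip_delta[OF sg, of \<omega> c r i z s, symmetric] unfolding gens_def by force
  have inTs: "(i,z,s) \<in> set ts" if "(i,z,s) \<in> set (gen i)" "i < n" for i z s
    using that unfolding ts_def by auto
  show "\<exists>\<omega>. blocks n E Vp Vm Ve c r \<omega> c' r'"
  proof (intro exI[of _ \<omega>])
    have eq0: "eqf n E c \<omega> i = 0" if "i < n" for i
    proof -
      have "0 \<le> 1 \<bullet> eqf n E c \<omega> i" "0 \<le> (-1) \<bullet> eqf n E c \<omega> i"
           "0 \<le> \<i> \<bullet> eqf n E c \<omega> i" "0 \<le> (-\<i>) \<bullet> eqf n E c \<omega> i"
        using W[OF inTs[of i 1 0, OF _ that]] W[OF inTs[of i "-1" 0, OF _ that]]
          W[OF inTs[of i "\<i>" 0, OF _ that]] W[OF inTs[of i "-\<i>" 0, OF _ that]]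
        by (simp_all add: gen_def)
      then show ?thesis by (auto simp: complex_eq_iff inner_complex_def)
    qed
    have "equilibrium_stress n E c \<omega>"
      using eq0 unfolding equilibrium_stress_def eqf_def by blast
    moreover have "\<forall>i\<in>tVm Vm r'. radial_force n E r \<omega> i \<ge> 0"
    proof
      fix i assume i: "i \<in> tVm Vm r'"
      then have "i < n" "i \<notin> tVp Vp r'" using sub dj unfolding tVm_def by auto
      then show "radial_force n E r \<omega> i \<ge> 0"
        using W[OF inTs[of i 0 "-1", OF _ \<open>i < n\<close>]] i \<open>i \<notin> tVp Vp r'\<close> by (simp add: gen_def)
    qed
    moreover have "\<forall>i\<in>tVp Vp r'. radial_force n E r \<omega> i \<le> 0"
    proof
      fix i assume i: "i \<in> tVp Vp r'"
      then have "i < n" using sub unfolding tVp_def by auto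
      then show "radial_force n E r \<omega> i \<le> 0"
        using W[OF inTs[of i 0 "1", OF _ \<open>i < n\<close>]] i by (simp add: gen_def)
    qed
    moreover have "\<forall>i\<in>tV0 n Vp Vm Ve r'. radial_force n E r \<omega> i = 0"
    proof
      fix i assume i: "i \<in> tV0 n Vp Vm Ve r'"
      then have "i < n" "i \<notin> tVp Vp r'" "i \<notin> tVm Vm r'" "i \<notin> Ve" unfolding tV0_def by auto
      then show "radial_force n E r \<omega> i = 0"
        using W[OF inTs[of i 0 "1", OF _ \<open>i < n\<close>]] W[OF inTs[of i 0 "-1", OF _ \<open>i < n\<close>]] by (simp add: gen_def)
    qed
    moreover have "(\<Sum>(i,j)\<in>E. \<omega> (i,j) * ((c' i - c' j) \<bullet> (c' i - c' j) - (r' i + r' j)\<^sup>2)) > 0"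
      using w(2) by (simp add: blocks_sum)
    ultimately show "blocks n E Vp Vm Ve c r \<omega> c' r'" unfolding blocks_def by blast
  qed
next
  assume "\<exists>\<omega>. blocks n E Vp Vm Ve c r \<omega> c' r'"
  then obtain \<omega> where b: "blocks n E Vp Vm Ve c r \<omega> c' r'" by blast
  show "\<not> extendable E Vp Vm Ve c r c' r'"
  proof
    assume "extendable E Vp Vm Ve c r c' r'"
    then obtain C R where CR: "\<forall>e\<in>E. Lmap c r C R e = bvec c' r' e"
      "\<forall>i\<in>tVp Vp r'. R i \<ge> 0" "\<forall>i\<in>tVm Vm r'. R i \<le> 0" "\<forall>i\<in>Ve. R i = 0"
      unfolding extendable_iff by blast
    have neg: "ipE E \<omega> (bvec c' r') < 0" using b unfolding blocks_def by (simp add: blocks_sum)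
    have eq0: "eqf n E c \<omega> i = 0" if "i < n" for i
      using b that unfolding blocks_def equilibrium_stress_def eqf_def by blast
    have "ipE E \<omega> (bvec c' r') = ipE E \<omega> (Lmap c r C R)"
      unfolding ipE_def using CR(1) by (intro sum.cong) auto
    also have "\<dots> = (\<Sum>i<n. ipE E \<omega> (Lmap c r (delta i (C i)) (delta i (R i))))"
    proof -
      have "ipE E \<omega> (Lmap c r C R) = (\<Sum>e\<in>E. \<Sum>i<n. \<omega> e * Lmap c r (delta i (C i)) (delta i (R i)) e)"
        unfolding ipE_def using decomp[OF sg] by (intro sum.cong) (auto simp: sum_distrib_left)
      also have "\<dots> = (\<Sum>i<n. \<Sum>e\<in>E. \<omega> e * Lmap c r (delta i (C i)) (delta i (R i)) e)"
        by (rule sum.swap)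
      finally show ?thesis unfolding ipE_def .
    qed
    also have "\<dots> = (\<Sum>i<n. - (R i * radial_force n E r \<omega> i))"
      by (simp add: ip_delta[OF sg] eq0)
    also have "\<dots> \<ge> 0"
    proof (rule sum_nonneg)
      fix i assume "i \<in> {..<n}"
      then have "i \<in> tVp Vp r' \<or> i \<in> tVm Vm r' \<or> i \<in> Ve \<or> i \<in> tV0 n Vp Vm Ve r'"
        unfolding tV0_def by auto
      moreover have rf: "\<forall>i\<in>tVm Vm r'. radial_force n E r \<omega> i \<ge> 0"
          "\<forall>i\<in>tVp Vp r'. radial_force n E r \<omega> i \<le> 0"
          "\<forall>i\<in>tV0 n Vp Vm Ve r'. radial_force n E r \<omega> i = 0"
        using b unfolding blocks_def by blast+
      ultimately show "0 \<le> - (R i * radial_force n E r \<omega> i)"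
      proof (elim disjE)
        assume "i \<in> tVp Vp r'"
        then have "R i \<ge> 0" "radial_force n E r \<omega> i \<le> 0" using CR(2) rf(2) by auto
        then show ?thesis by (simp add: mult_nonneg_nonpos)
      next
        assume "i \<in> tVm Vm r'"
        then have "R i \<le> 0" "radial_force n E r \<omega> i \<ge> 0" using CR(3) rf(1) by auto
        then show ?thesis by (simp add: mult_nonpos_nonneg)
      next
        assume "i \<in> Ve"
        then show ?thesis using CR(4) by simp
      next
        assume "i \<in> tV0 n Vp Vm Ve r'"
        then show ?thesis using rf(3) by simp
      qed
    qed
    finally show False using neg by simp
  qed
qed


theorem mainTheorem10:
  fixes n :: nat and E :: "(nat \<times> nat) set" and rot :: "nat \<Rightarrow> nat list"
    and c :: "nat \<Rightarrow> complex" and r :: "nat \<Rightarrow> real"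
    and Vp Vm Ve V0 :: "nat set"
  assumes "planar_embedding n E rot"
    and "packing n E rot c r"
    and "partition4 n Vp Vm Ve V0"
  shows "second_order_rigid n E Vp Vm Ve c r \<longleftrightarrow>
    (\<forall>c' r'. inf_flex E c r c' r' \<and> proper_flex Vp Vm Ve r' \<and> \<not> trivial_flex n c c' r'
       \<longrightarrow> (\<exists>\<omega>. blocks n E Vp Vm Ve c r \<omega> c' r'))"
proof -
  have sg: "simple_graph n E" using assms(1) unfolding planar_embedding_def by blast
  show ?thesis unfolding second_order_rigid_def
    using pointwise[OF sg assms(3)] by blast
qed

end
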